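(* Let $R\to R'$ be a homomorphism of commutative Noetherian $\mathbb{Z}[\frac1p,\zeta_p]$-algebras and let $(\rho,V)$ be an $R[G_n]$-module of $\psi$-Whittaker type. Then $(\rho\otimes_RR',V\otimes_RR')$ is of $\psi$-Whittaker type and $\mathcal{W}(V\otimes_RR',\psi_{R'})=\mathcal{W}(V,\psi_R)\otimes_RR'$, i.e. the Whittaker model of $V\otimes_RR'$ is the image of $\mathcal{W}(V,\psi_R)\otimes_RR'$ under the natural identification $\mathrm{Ind}_{N_n}^{G_n}\psi_R\otimes_RR'\cong\mathrm{Ind}_{N_n}^{G_n}\psi_{R'}$.
   Context: Let $p$ be a prime, $q$ a power of $p$, $G_n=\mathrm{GL}_n(\mathbb{F}_q)$, $N_n$ the upper unipotent subgroup. Fix nontrivial $\psi:(\mathbb{F}_q,+)\to\mathbb{Z}[\frac1p,\zeta_p]^\times$; for an algebra $R$, $\psi_R$ is its image in $R^\times$, a character of $N_n$ via $u\mapsto\psi_R(\sum_iu_{i,i+1})$. $\mathrm{Ind}_{N_n}^{G_n}\psi_R=\{f:G_n\to R:f(ug)=\psi_R(u)f(g)\}$. An $R[G_n]$-module $V$ is of $\psi$-Whittaker type if its $(N_n,\psi_R)$-coinvariants $V_{N_n,\psi_R}$ (its $n$-th derivative) form a free $R$-module of rank one; then a generator $\lambda$ of $\mathrm{Hom}_R(V_{N_n,\psi_R},R)$ gives $V\to\mathrm{Ind}_{N_n}^{G_n}\psi_R$, $v\mapsto(g\mapsto\lambda(\overline{gv}))$, whose image (independent of $\lambda$) is the Whittaker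 model $\mathcal{W}(V,\psi_R)$. *)

theory Defs
  imports Complex_Main "HOL-Library.Poly_Mapping" "HOL-Library.Function_Algebras" "HOL-Computational_Algebra.Primes"
begin

type_synonym 'f mat = "nat \<Rightarrow> nat \<Rightarrow> 'f"

definition is_mat :: "nat \<Rightarrow> ('f::zero) mat \<Rightarrow> bool" where
  "is_mat n A \<longleftrightarrow> (\<forall>i j. \<not> (i < n \<and> j < n) \<longrightarrow> A i j = 0)"

definition mat_mult :: "nat \<Rightarrow> ('f::comm_semiring_1) mat \<Rightarrow> 'f mat \<Rightarrow> 'f mat" where
  "mat_mult n A B = (\<lambda>i j. if i < n \<and> j < n then (\<Sum>k<n. A i k * B k j) else 0)"

definition mat_one :: "nat \<Rightarrow> ('f::zero_neq_one) mat" where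
  "mat_one n = (\<lambda>i j. if i < n \<and> j < n \<and> i = j then 1 else 0)"

definition GL :: "nat \<Rightarrow> ('f::field) mat set" where
  "GL n = {A. is_mat n A \<and> (\<exists>B. is_mat n B \<and> mat_mult n A B = mat_one n \<and> mat_mult n B A = mat_one n)}"

definition unip :: "nat \<Rightarrow> ('f::field) mat set" where
  "unip n = {A. is_mat n A \<and> (\<forall>i<n. \<forall>j<n. (j < i \<longrightarrow> A i j = 0) \<and> (i = j \<longrightarrow> A i j = 1))}"

definition superdiag :: "nat \<Rightarrow> ('f::field) mat \<Rightarrow> 'f" where
  "superdiag n u = (\<Sum>i<n - 1. u i (Suc i))"

definition zeta :: "nat \<Rightarrow> complex" where
  "zeta p = cis (2 * pi / real p)"

definition Zp :: "nat \<Rightarrow> complex set" where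
  "Zp p = {(\<Sum>i<p. of_int (c i) * zeta p ^ i) / of_nat p ^ k | (c :: nat \<Rightarrow> int) (k :: nat). True}"

definition Zp_algebra :: "nat \<Rightarrow> (complex \<Rightarrow> 'r::comm_ring_1) \<Rightarrow> bool" where
  "Zp_algebra p \<iota> \<longleftrightarrow> \<iota> 1 = 1 \<and>
     (\<forall>x\<in>Zp p. \<forall>y\<in>Zp p. \<iota> (x + y) = \<iota> x + \<iota> y \<and> \<iota> (x * y) = \<iota> x * \<iota> y)"

definition add_char :: "nat \<Rightarrow> ('f::field \<Rightarrow> complex) \<Rightarrow> bool" where
  "add_char p \<psi> \<longleftrightarrow> (\<forall>a. \<psi> a \<in> Zp p \<and> (\<exists>b\<in>Zp p. \<psi> a * b = 1)) \<and>
     (\<forall>a b. \<psi> (a + b) = \<psi> a * \<psi> b) \<and> (\<exists>a. \<psi> a \<noteq> 1)"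

definition ring_hom :: "('r::comm_ring_1 \<Rightarrow> 's::comm_ring_1) \<Rightarrow> bool" where
  "ring_hom \<phi> \<longleftrightarrow> \<phi> 1 = 1 \<and> (\<forall>x y. \<phi> (x + y) = \<phi> x + \<phi> y \<and> \<phi> (x * y) = \<phi> x * \<phi> y)"

definition ring_ideal :: "('r::comm_ring_1) set \<Rightarrow> bool" where
  "ring_ideal I \<longleftrightarrow> 0 \<in> I \<and> (\<forall>x\<in>I. \<forall>y\<in>I. x + y \<in> I) \<and> (\<forall>r. \<forall>x\<in>I. r * x \<in> I)"

definition noetherian_ring :: "('r::comm_ring_1) itself \<Rightarrow> bool" where
  "noetherian_ring _ \<longleftrightarrow> (\<forall>I :: nat \<Rightarrow> 'r set.
      (\<forall>k. ring_ideal (I k)) \<and> (\<forall>k. I k \<subseteq> I (Suc k)) \<longrightarrow> (\<exists>N. \<forall>k\<ge>N. I k = I N))"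

definition RG_module :: "nat \<Rightarrow> ('r::comm_ring_1 \<Rightarrow> 'v::ab_group_add \<Rightarrow> 'v)
    \<Rightarrow> (('f::field) mat \<Rightarrow> 'v \<Rightarrow> 'v) \<Rightarrow> bool" where
  "RG_module n scale act \<longleftrightarrow> module scale \<and>
     (\<forall>g\<in>GL n. module_hom scale scale (act g)) \<and>
     act (mat_one n) = id \<and>
     (\<forall>g\<in>GL n. \<forall>h\<in>GL n. act (mat_mult n g h) = act g \<circ> act h)"

text \<open>For a module M and a submodule K (M/K being the module of interest), the
  preimage in M of the kernel of M/K -> (M/K)_{N_n,chi}: K + span{u v - chi(u) v}.\<close>
definition coinv_rel :: "nat \<Rightarrow> ('r::comm_ring_1 \<Rightarrow> 'v::ab_group_add \<Rightarrow> 'v)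
    \<Rightarrow> (('f::field) mat \<Rightarrow> 'v \<Rightarrow> 'v) \<Rightarrow> ('f \<Rightarrow> 'r) \<Rightarrow> 'v set \<Rightarrow> 'v set" where
  "coinv_rel n scale act \<chi> K = module.span scale
     (K \<union> {act u v - scale (\<chi> (superdiag n u)) v | u v. u \<in> unip n})"

text \<open>A generator of Hom_R((M/K)_{N_n,chi}, R) when this coinvariant module is free of
  rank one, i.e. an R-linear isomorphism (M/K)_{N_n,chi} -> R, viewed as a map on M.\<close>
definition whittaker_functional :: "nat \<Rightarrow> ('r::comm_ring_1 \<Rightarrow> 'v::ab_group_add \<Rightarrow> 'v)
    \<Rightarrow> (('f::field) mat \<Rightarrow> 'v \<Rightarrow> 'v) \<Rightarrow> ('f \<Rightarrow> 'r) \<Rightarrow> 'v set \<Rightarrow> ('v \<Rightarrow> 'r) \<Rightarrow> bool" where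
  "whittaker_functional n scale act \<chi> K lam \<longleftrightarrow>
     module_hom scale (*) lam \<and> surj lam \<and> {v. lam v = 0} = coinv_rel n scale act \<chi> K"

text \<open>M/K is of chi-Whittaker type: its (N_n,chi)-coinvariants are free of rank one.\<close>
definition whittaker_type :: "nat \<Rightarrow> ('r::comm_ring_1 \<Rightarrow> 'v::ab_group_add \<Rightarrow> 'v)
    \<Rightarrow> (('f::field) mat \<Rightarrow> 'v \<Rightarrow> 'v) \<Rightarrow> ('f \<Rightarrow> 'r) \<Rightarrow> 'v set \<Rightarrow> bool" where
  "whittaker_type n scale act \<chi> K \<longleftrightarrow> (\<exists>lam. whittaker_functional n scale act \<chi> K lam)"

text \<open>Whittaker model: image of v |-> (g |-> lam(g v)) in Ind; functions on G_n,
  extended by 0 outside G_n.\<close>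
definition whittaker_model :: "nat \<Rightarrow> (('f::field) mat \<Rightarrow> 'v \<Rightarrow> 'v) \<Rightarrow> ('v \<Rightarrow> 'r::zero)
    \<Rightarrow> ('f mat \<Rightarrow> 'r) set" where
  "whittaker_model n act lam = {(\<lambda>g. if g \<in> GL n then lam (act g v) else 0) | v. True}"

definition free_scale :: "'s::comm_ring_1 \<Rightarrow> ('v \<Rightarrow>\<^sub>0 's) \<Rightarrow> ('v \<Rightarrow>\<^sub>0 's)" where
  "free_scale r x = Poly_Mapping.map (\<lambda>a. r * a) x"

definition free_act :: "('g \<Rightarrow> 'v \<Rightarrow> 'v) \<Rightarrow> 'g \<Rightarrow> ('v \<Rightarrow>\<^sub>0 's::comm_ring_1) \<Rightarrow> ('v \<Rightarrow>\<^sub>0 's)" where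
  "free_act act g x = (\<Sum>v\<in>Poly_Mapping.keys x. Poly_Mapping.single (act g v) (Poly_Mapping.lookup x v))"

text \<open>Relations defining V \<otimes>_R R' = F/K, F the free R'-module on V.\<close>
definition tensor_rel :: "('r::comm_ring_1 \<Rightarrow> 'v::ab_group_add \<Rightarrow> 'v) \<Rightarrow> ('r \<Rightarrow> 's::comm_ring_1)
    \<Rightarrow> ('v \<Rightarrow>\<^sub>0 's) set" where
  "tensor_rel scale \<phi> = module.span free_scale
     ({Poly_Mapping.single (v + w) 1 - Poly_Mapping.single v 1 - Poly_Mapping.single w 1 | v w. True}
      \<union> {Poly_Mapping.single (scale r v) 1 - Poly_Mapping.single v (\<phi> r) | r v. True})"

text \<open>Image of W(V,psi_R) \<otimes>_R R' in Ind psi_{R'}: R'-span of the phi o f.\<close>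
definition base_change_model :: "('r \<Rightarrow> 's::comm_ring_1) \<Rightarrow> ('g \<Rightarrow> 'r) set \<Rightarrow> ('g \<Rightarrow> 's) set" where
  "base_change_model \<phi> W = module.span (\<lambda>r f. \<lambda>g. r * f g) {(\<lambda>g. \<phi> (f g)) | f. f \<in> W}"

end

theory Submission
  imports Defs
begin

lemma fun_sum_apply: "(\<Sum>i\<in>A. f i) x = (\<Sum>i\<in>A. f i x)"
  by (induction A rule: infinite_finite_induct) (auto simp: plus_fun_def zero_fun_def)

lemma lookup_free_scale: "Poly_Mapping.lookup (free_scale r x) k = r * Poly_Mapping.lookup x k"
  unfolding free_scale_def by transfer (simp add: when_def)

lemma module_free_scale: "module (free_scale :: 's::comm_ring_1 \<Rightarrow> ('v \<Rightarrow>\<^sub>0 's) \<Rightarrow> _)"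
  by unfold_locales (auto intro!: poly_mapping_eqI simp: lookup_free_scale lookup_add algebra_simps)

lemma module_mult: "module ((*) :: 's::comm_ring_1 \<Rightarrow> 's \<Rightarrow> 's)"
  by unfold_locales (auto simp: algebra_simps)

lemma module_fun: "module ((\<lambda>r f. \<lambda>g. r * f g) :: 's::comm_ring_1 \<Rightarrow> ('g \<Rightarrow> 's) \<Rightarrow> _)"
  by unfold_locales (auto simp: algebra_simps plus_fun_def)

lemma free_scale_single: "free_scale r (Poly_Mapping.single v a) = Poly_Mapping.single v (r * a)"
  unfolding free_scale_def by simp

lemma pm_sum_single:
  assumes "finite A" "Poly_Mapping.keys x \<subseteq> A"
  shows "x = (\<Sum>v\<in>A. Poly_Mapping.single v (Poly_Mapping.lookup x v))"
proof (rule poly_mapping_eqI)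
  fix k
  show "Poly_Mapping.lookup x k = Poly_Mapping.lookup (\<Sum>v\<in>A. Poly_Mapping.single v (Poly_Mapping.lookup x v)) k"
    using assms by (auto simp: lookup_sum lookup_single when_def in_keys_iff)
qed

lemma single_sum: "Poly_Mapping.single k (\<Sum>i\<in>A. f i) = (\<Sum>i\<in>A. Poly_Mapping.single k (f i))"
  by (induction A rule: infinite_finite_induct) (auto simp: single_add)

lemma free_act_superset:
  assumes "finite A" "Poly_Mapping.keys x \<subseteq> A"
  shows "free_act act g x = (\<Sum>v\<in>A. Poly_Mapping.single (act g v) (Poly_Mapping.lookup x v))"
  unfolding free_act_def using assms
  by (intro sum.mono_neutral_left) (auto simp: in_keys_iff)

lemma free_act_single: "free_act act g (Poly_Mapping.single v a) = Poly_Mapping.single (act g v) a"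
  by (subst free_act_superset[of "{v}"]) auto

lemma free_act_zero: "free_act act g 0 = 0"
  unfolding free_act_def by simp

lemma free_act_add: "free_act act g (x + y) = free_act act g x + free_act act g y"
proof -
  let ?A = "Poly_Mapping.keys x \<union> Poly_Mapping.keys y"
  have "free_act act g (x + y) = (\<Sum>v\<in>?A. Poly_Mapping.single (act g v) (Poly_Mapping.lookup (x+y) v))"
    using keys_add[of x y] by (intro free_act_superset) auto
  also have "\<dots> = (\<Sum>v\<in>?A. Poly_Mapping.single (act g v) (Poly_Mapping.lookup x v))
      + (\<Sum>v\<in>?A. Poly_Mapping.single (act g v) (Poly_Mapping.lookup y v))"
    by (simp add: lookup_add single_add sum.distrib)
  also have "\<dots> = free_act act g x + free_act act g y"
    by (simp add: free_act_superset[symmetric])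
  finally show ?thesis .
qed

lemma free_act_scale: "free_act act g (free_scale r x) = free_scale r (free_act act g x)"
proof -
  interpret F: module "free_scale :: 's::comm_ring_1 \<Rightarrow> ('v \<Rightarrow>\<^sub>0 's) \<Rightarrow> _" by (rule module_free_scale)
  have "free_act act g (free_scale r x) = (\<Sum>v\<in>Poly_Mapping.keys x. Poly_Mapping.single (act g v) (Poly_Mapping.lookup (free_scale r x) v))"
    by (rule free_act_superset) (auto simp: in_keys_iff lookup_free_scale)
  also have "\<dots> = free_scale r (free_act act g x)"
    by (simp add: free_act_def F.scale_sum_right lookup_free_scale free_scale_single)
  finally show ?thesis .
qed


lemma phi0: "ring_hom \<phi> \<Longrightarrow> \<phi> 0 = 0"
  unfolding ring_hom_def by (metis add_cancel_right_right add_0)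

lemma phi_diff: "ring_hom \<phi> \<Longrightarrow> \<phi> (a - b) = \<phi> a - \<phi> b"
  unfolding ring_hom_def by (metis add_diff_cancel diff_add_cancel)

definition Lam0 :: "('r \<Rightarrow> 's::comm_ring_1) \<Rightarrow> ('v \<Rightarrow> 'r) \<Rightarrow> ('v \<Rightarrow>\<^sub>0 's) \<Rightarrow> 's" where
  "Lam0 \<phi> lam x = (\<Sum>v\<in>Poly_Mapping.keys x. Poly_Mapping.lookup x v * \<phi> (lam v))"

lemma Lam0_superset:
  assumes "finite A" "Poly_Mapping.keys x \<subseteq> A"
  shows "Lam0 \<phi> lam x = (\<Sum>v\<in>A. Poly_Mapping.lookup x v * \<phi> (lam v))"
  unfolding Lam0_def using assms
  by (intro sum.mono_neutral_left) (auto simp: in_keys_iff)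

lemma Lam0_single: "Lam0 \<phi> lam (Poly_Mapping.single v a) = a * \<phi> (lam v)"
  by (subst Lam0_superset[of "{v}"]) auto

lemma Lam0_hom: "module_hom free_scale (*) (Lam0 \<phi> lam)"
proof -
  have add: "Lam0 \<phi> lam (x + y) = Lam0 \<phi> lam x + Lam0 \<phi> lam y" for x y
  proof -
    let ?A = "Poly_Mapping.keys x \<union> Poly_Mapping.keys y"
    have "Lam0 \<phi> lam (x + y) = (\<Sum>v\<in>?A. Poly_Mapping.lookup (x+y) v * \<phi> (lam v))"
      using keys_add[of x y] by (intro Lam0_superset) auto
    also have "\<dots> = (\<Sum>v\<in>?A. Poly_Mapping.lookup x v * \<phi> (lam v)) + (\<Sum>v\<in>?A. Poly_Mapping.lookup y v * \<phi> (lam v))"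
      by (simp add: lookup_add distrib_right sum.distrib)
    also have "\<dots> = Lam0 \<phi> lam x + Lam0 \<phi> lam y"
      by (simp add: Lam0_superset[symmetric])
    finally show ?thesis .
  qed
  have sc: "Lam0 \<phi> lam (free_scale r x) = r * Lam0 \<phi> lam x" for r x
  proof -
    have "Lam0 \<phi> lam (free_scale r x) = (\<Sum>v\<in>Poly_Mapping.keys x. Poly_Mapping.lookup (free_scale r x) v * \<phi> (lam v))"
      by (rule Lam0_superset) (auto simp: in_keys_iff lookup_free_scale)
    also have "\<dots> = r * Lam0 \<phi> lam x"
      by (simp add: Lam0_def lookup_free_scale sum_distrib_left mult.assoc)
    finally show ?thesis .
  qed
  show ?thesis
    unfolding module_hom_def module_hom_axioms_def
    using module_free_scale module_mult add sc by blast
qed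


context
  fixes n :: nat
    and scale :: "'r::comm_ring_1 \<Rightarrow> 'v::ab_group_add \<Rightarrow> 'v"
    and act :: "'f::field mat \<Rightarrow> 'v \<Rightarrow> 'v"
    and \<chi> :: "'f \<Rightarrow> 'r" and \<chi>' :: "'f \<Rightarrow> 's::comm_ring_1"
    and \<phi> :: "'r \<Rightarrow> 's" and lam :: "'v \<Rightarrow> 'r"
  assumes modV: "module scale"
    and wf: "whittaker_functional n scale act \<chi> {0} lam"
    and hom: "ring_hom \<phi>"
    and compat: "\<And>a. \<phi> (\<chi> a) = \<chi>' a"
begin

lemma ctx_facts:
  shows "module_hom scale (*) lam" "surj lam"
    "{v. lam v = 0} = module.span scale ({0} \<union> {act u v - scale (\<chi> (superdiag n u)) v | u v. u \<in> unip n})"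
  using wf unfolding whittaker_functional_def coinv_rel_def by auto

lemma in_C'_base:
  assumes "x \<in> tensor_rel scale \<phi> \<or> x \<in> {free_act act u v - free_scale (\<chi>' (superdiag n u)) v | u v. u \<in> unip n}"
  shows "x \<in> coinv_rel n free_scale (free_act act) \<chi>' (tensor_rel scale \<phi>)"
proof -
  interpret F: module "free_scale :: 's \<Rightarrow> ('v \<Rightarrow>\<^sub>0 's) \<Rightarrow> _" by (rule module_free_scale)
  show ?thesis using assms unfolding coinv_rel_def by (auto intro: F.span_base)
qed

lemma R1: "Poly_Mapping.single (a+b) (1::'s) - Poly_Mapping.single a 1 - Poly_Mapping.single b 1
   \<in> coinv_rel n free_scale (free_act act) \<chi>' (tensor_rel scale \<phi>)"
proof -
  interpret F: module "free_scale :: 's \<Rightarrow> ('v \<Rightarrow>\<^sub>0 's) \<Rightarrow> _" by (rule module_free_scale)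
  show ?thesis by (rule in_C'_base) (auto simp: tensor_rel_def intro!: F.span_base)
qed

lemma R2: "Poly_Mapping.single (scale r v) (1::'s) - Poly_Mapping.single v (\<phi> r)
   \<in> coinv_rel n free_scale (free_act act) \<chi>' (tensor_rel scale \<phi>)"
proof -
  interpret F: module "free_scale :: 's \<Rightarrow> ('v \<Rightarrow>\<^sub>0 's) \<Rightarrow> _" by (rule module_free_scale)
  show ?thesis by (rule in_C'_base) (auto simp: tensor_rel_def intro!: F.span_base)
qed

lemma C'_subspace: "module.subspace free_scale (coinv_rel n free_scale (free_act act) \<chi>' (tensor_rel scale \<phi>) :: ('v \<Rightarrow>\<^sub>0 's) set)"
proof -
  interpret F: module "free_scale :: 's \<Rightarrow> ('v \<Rightarrow>\<^sub>0 's) \<Rightarrow> _" by (rule module_free_scale)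
  show ?thesis unfolding coinv_rel_def by simp
qed

lemma R3: "Poly_Mapping.single (a - b) (1::'s) - Poly_Mapping.single a 1 + Poly_Mapping.single b 1
   \<in> coinv_rel n free_scale (free_act act) \<chi>' (tensor_rel scale \<phi>)"
proof -
  interpret F: module "free_scale :: 's \<Rightarrow> ('v \<Rightarrow>\<^sub>0 's) \<Rightarrow> _" by (rule module_free_scale)
  have "- (Poly_Mapping.single ((a-b)+b) (1::'s) - Poly_Mapping.single (a-b) 1 - Poly_Mapping.single b 1)
     \<in> coinv_rel n free_scale (free_act act) \<chi>' (tensor_rel scale \<phi>)"
    by (rule F.subspace_neg[OF C'_subspace R1])
  then show ?thesis by (simp add: algebra_simps)
qed

lemma R0: "Poly_Mapping.single 0 (1::'s) \<in> coinv_rel n free_scale (free_act act) \<chi>' (tensor_rel scale \<phi>)"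
  using R3[of 0 0] by simp

lemma D:
  assumes "c \<in> module.span scale ({0} \<union> {act u v - scale (\<chi> (superdiag n u)) v | u v. u \<in> unip n})"
  shows "Poly_Mapping.single c (1::'s) \<in> coinv_rel n free_scale (free_act act) \<chi>' (tensor_rel scale \<phi>)"
proof -
  interpret F: module "free_scale :: 's \<Rightarrow> ('v \<Rightarrow>\<^sub>0 's) \<Rightarrow> _" by (rule module_free_scale)
  interpret V: module scale by (rule modV)
  let ?C = "coinv_rel n free_scale (free_act act) \<chi>' (tensor_rel scale \<phi>) :: ('v \<Rightarrow>\<^sub>0 's) set"
  have sub: "F.subspace ?C" by (rule C'_subspace)
  have gen: "Poly_Mapping.single x (1::'s) \<in> ?C"
    if hx: "x \<in> {0} \<union> {act u v - scale (\<chi> (superdiag n u)) v | u v. u \<in> unip n}" for x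
  proof (cases "x = 0")
    case True then show ?thesis using R0 by simp
  next
    case False
    then obtain u v where u: "u \<in> unip n" and x: "x = act u v - scale (\<chi> (superdiag n u)) v"
      using hx False by auto
    let ?s = "scale (\<chi> (superdiag n u)) v"
    have a: "Poly_Mapping.single x (1::'s) - Poly_Mapping.single (act u v) 1 + Poly_Mapping.single ?s 1 \<in> ?C"
      unfolding x by (rule R3)
    have b: "Poly_Mapping.single ?s (1::'s) - free_scale (\<chi>' (superdiag n u)) (Poly_Mapping.single v 1) \<in> ?C"
      using R2[of "\<chi> (superdiag n u)" v] by (simp add: free_scale_single compat)
    have c: "free_act act u (Poly_Mapping.single v 1) - free_scale (\<chi>' (superdiag n u)) (Poly_Mapping.single v (1::'s)) \<in> ?C"
      using u by (intro in_C'_base) blast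
    have "Poly_Mapping.single x (1::'s) = (Poly_Mapping.single x (1::'s) - Poly_Mapping.single (act u v) 1 + Poly_Mapping.single ?s 1)
       - (Poly_Mapping.single ?s (1::'s) - free_scale (\<chi>' (superdiag n u)) (Poly_Mapping.single v 1))
       + (free_act act u (Poly_Mapping.single v 1) - free_scale (\<chi>' (superdiag n u)) (Poly_Mapping.single v (1::'s)))"
      by (simp add: free_act_single)
    also have "\<dots> \<in> ?C"
      by (intro F.subspace_add F.subspace_diff sub a b c)
    finally show ?thesis .
  qed
  from assms show ?thesis
  proof (induction rule: V.span_induct_alt)
    case base
    then show ?case using R0 by simp
  next
    case (step c x y)
    have "Poly_Mapping.single (scale c x + y) (1::'s) =
      (Poly_Mapping.single (scale c x + y) 1 - Poly_Mapping.single (scale c x) 1 - Poly_Mapping.single y 1)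
      + (Poly_Mapping.single (scale c x) 1 - Poly_Mapping.single x (\<phi> c))
      + free_scale (\<phi> c) (Poly_Mapping.single x 1) + Poly_Mapping.single y 1"
      by (simp add: free_scale_single)
    also have "\<dots> \<in> ?C"
      by (intro F.subspace_add F.subspace_scale sub R1 R2 gen step)
    finally show ?case .
  qed
qed

lemma E:
  assumes e: "lam e = 1"
  shows "Poly_Mapping.single v (1::'s) - Poly_Mapping.single e (\<phi> (lam v))
     \<in> coinv_rel n free_scale (free_act act) \<chi>' (tensor_rel scale \<phi>)"
proof -
  interpret F: module "free_scale :: 's \<Rightarrow> ('v \<Rightarrow>\<^sub>0 's) \<Rightarrow> _" by (rule module_free_scale)
  interpret L: module_hom scale "(*)" lam by (rule ctx_facts(1))
  let ?C = "coinv_rel n free_scale (free_act act) \<chi>' (tensor_rel scale \<phi>) :: ('v \<Rightarrow>\<^sub>0 's) set"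
  have sub: "F.subspace ?C" by (rule C'_subspace)
  let ?s = "scale (lam v) e"
  have "lam (v - ?s) = 0" using e by (simp add: L.diff L.scale)
  then have "v - ?s \<in> module.span scale ({0} \<union> {act u v - scale (\<chi> (superdiag n u)) v | u v. u \<in> unip n})"
    using ctx_facts(3) by blast
  then have w: "Poly_Mapping.single (v - ?s) (1::'s) \<in> ?C" by (rule D)
  have "Poly_Mapping.single v (1::'s) - Poly_Mapping.single e (\<phi> (lam v)) =
     Poly_Mapping.single (v - ?s) (1::'s)
     - (Poly_Mapping.single (v - ?s) 1 - Poly_Mapping.single v 1 + Poly_Mapping.single ?s 1)
     + (Poly_Mapping.single ?s 1 - Poly_Mapping.single e (\<phi> (lam v)))"
    by (simp add: algebra_simps)
  also have "\<dots> \<in> ?C"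
    by (intro F.subspace_add F.subspace_diff sub w R3 R2)
  finally show ?thesis .
qed

lemma Fx:
  assumes e: "lam e = 1"
  shows "x - free_scale (Lam0 \<phi> lam x) (Poly_Mapping.single e 1)
     \<in> coinv_rel n free_scale (free_act act) \<chi>' (tensor_rel scale \<phi>)"
proof -
  interpret F: module "free_scale :: 's \<Rightarrow> ('v \<Rightarrow>\<^sub>0 's) \<Rightarrow> _" by (rule module_free_scale)
  let ?C = "coinv_rel n free_scale (free_act act) \<chi>' (tensor_rel scale \<phi>) :: ('v \<Rightarrow>\<^sub>0 's) set"
  have sub: "F.subspace ?C" by (rule C'_subspace)
  let ?K = "Poly_Mapping.keys x"
  have x: "x = (\<Sum>v\<in>?K. free_scale (Poly_Mapping.lookup x v) (Poly_Mapping.single v 1))"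
    by (subst pm_sum_single[of ?K x]) (auto simp: free_scale_single)
  have y: "free_scale (Lam0 \<phi> lam x) (Poly_Mapping.single e 1)
     = (\<Sum>v\<in>?K. free_scale (Poly_Mapping.lookup x v) (Poly_Mapping.single e (\<phi> (lam v))))"
    by (simp add: free_scale_single Lam0_def single_sum)
  have "x - free_scale (Lam0 \<phi> lam x) (Poly_Mapping.single e 1)
     = (\<Sum>v\<in>?K. free_scale (Poly_Mapping.lookup x v) (Poly_Mapping.single v 1 - Poly_Mapping.single e (\<phi> (lam v))))"
    by (subst y, subst (1) x) (simp add: F.scale_right_diff_distrib sum_subtractf)
  also have "\<dots> \<in> ?C"
    by (intro F.subspace_sum[OF sub] F.subspace_scale[OF sub] E e)
  finally show ?thesis .
qed

lemma lam_act: "u \<in> unip n \<Longrightarrow> lam (act u v) = \<chi> (superdiag n u) * lam v"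
proof -
  interpret V: module scale by (rule modV)
  interpret L: module_hom scale "(*)" lam by (rule ctx_facts(1))
  assume u: "u \<in> unip n"
  have "act u v - scale (\<chi> (superdiag n u)) v \<in> module.span scale ({0} \<union> {act u v - scale (\<chi> (superdiag n u)) v | u v. u \<in> unip n})"
    using u by (intro V.span_base) blast
  then have "lam (act u v - scale (\<chi> (superdiag n u)) v) = 0"
    using ctx_facts(3) by blast
  then show ?thesis by (simp add: L.diff L.scale)
qed

lemma Lam0_free_act: "Lam0 \<phi> lam (free_act act g x) = (\<Sum>v\<in>Poly_Mapping.keys x. Poly_Mapping.lookup x v * \<phi> (lam (act g v)))"
proof -
  interpret L0: module_hom "free_scale :: 's \<Rightarrow> ('v \<Rightarrow>\<^sub>0 's) \<Rightarrow> _" "(*)" "Lam0 \<phi> lam" by (rule Lam0_hom)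
  show ?thesis unfolding free_act_def by (simp add: L0.sum Lam0_single)
qed

lemma G: "coinv_rel n free_scale (free_act act) \<chi>' (tensor_rel scale \<phi>) \<subseteq> {x. Lam0 \<phi> lam x = 0}"
proof -
  interpret F: module "free_scale :: 's \<Rightarrow> ('v \<Rightarrow>\<^sub>0 's) \<Rightarrow> _" by (rule module_free_scale)
  interpret L0: module_hom "free_scale :: 's \<Rightarrow> ('v \<Rightarrow>\<^sub>0 's) \<Rightarrow> _" "(*)" "Lam0 \<phi> lam" by (rule Lam0_hom)
  interpret L: module_hom scale "(*)" lam by (rule ctx_facts(1))
  have sub: "F.subspace {x :: 'v \<Rightarrow>\<^sub>0 's. Lam0 \<phi> lam x = 0}" by (rule L0.subspace_kernel)
  have K: "tensor_rel scale \<phi> \<subseteq> {x :: 'v \<Rightarrow>\<^sub>0 's. Lam0 \<phi> lam x = 0}"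
    unfolding tensor_rel_def
  proof (rule F.span_minimal[OF _ sub])
    show "{Poly_Mapping.single (v + w) 1 - Poly_Mapping.single v 1 - Poly_Mapping.single w 1 |v w. True} \<union>
      {Poly_Mapping.single (scale r v) 1 - Poly_Mapping.single v (\<phi> r) |r v. True} \<subseteq> {x. Lam0 \<phi> lam x = 0}"
      using hom unfolding ring_hom_def by (auto simp: L0.diff Lam0_single L.add L.scale)
  qed
  have S: "{free_act act u v - free_scale (\<chi>' (superdiag n u)) v | u v. u \<in> unip n} \<subseteq> {x :: 'v \<Rightarrow>\<^sub>0 's. Lam0 \<phi> lam x = 0}"
  proof safe
    fix u :: "'f mat" and x :: "'v \<Rightarrow>\<^sub>0 's" assume u: "u \<in> unip n"
    have "Lam0 \<phi> lam (free_act act u x) = (\<Sum>v\<in>Poly_Mapping.keys x. Poly_Mapping.lookup x v * (\<chi>' (superdiag n u) * \<phi> (lam v)))"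
      using hom unfolding ring_hom_def by (simp add: Lam0_free_act lam_act[OF u] compat)
    also have "\<dots> = \<chi>' (superdiag n u) * Lam0 \<phi> lam x"
      unfolding Lam0_def sum_distrib_left by (rule sum.cong) (simp_all add: mult.left_commute)
    also have "\<dots> = Lam0 \<phi> lam (free_scale (\<chi>' (superdiag n u)) x)"
      by (rule L0.scale[symmetric])
    finally show "Lam0 \<phi> lam (free_act act u x - free_scale (\<chi>' (superdiag n u)) x) = 0"
      by (simp add: L0.diff)
  qed
  show ?thesis unfolding coinv_rel_def
    by (rule F.span_minimal[OF Un_least[OF K S] sub])
qed

lemma key: "whittaker_functional n free_scale (free_act act) \<chi>' (tensor_rel scale \<phi>) (Lam0 \<phi> lam)"
proof -
  interpret F: module "free_scale :: 's \<Rightarrow> ('v \<Rightarrow>\<^sub>0 's) \<Rightarrow> _" by (rule module_free_scale)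
  obtain e where e: "lam e = 1" using ctx_facts(2) by (metis surjD)
  have surj: "surj (Lam0 \<phi> lam :: ('v \<Rightarrow>\<^sub>0 's) \<Rightarrow> 's)"
  proof (rule surjI)
    fix r :: 's show "Lam0 \<phi> lam (Poly_Mapping.single e r) = r"
      using hom e unfolding ring_hom_def by (simp add: Lam0_single)
  qed
  have "{x :: 'v \<Rightarrow>\<^sub>0 's. Lam0 \<phi> lam x = 0} \<subseteq> coinv_rel n free_scale (free_act act) \<chi>' (tensor_rel scale \<phi>)"
  proof safe
    fix x :: "'v \<Rightarrow>\<^sub>0 's" assume "Lam0 \<phi> lam x = 0"
    then show "x \<in> coinv_rel n free_scale (free_act act) \<chi>' (tensor_rel scale \<phi>)"
      using Fx[OF e, of x] by (simp only: F.scale_zero_left diff_zero)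
  qed
  then have "{x. Lam0 \<phi> lam x = 0} = coinv_rel n free_scale (free_act act) \<chi>' (tensor_rel scale \<phi>)"
    using G by (rule subset_antisym)
  then show ?thesis using surj Lam0_hom unfolding whittaker_functional_def by simp
qed

end



context
  fixes n :: nat
    and scale :: "'r::comm_ring_1 \<Rightarrow> 'v::ab_group_add \<Rightarrow> 'v"
    and act :: "'f::field mat \<Rightarrow> 'v \<Rightarrow> 'v"
    and \<chi> :: "'f \<Rightarrow> 'r" and \<chi>' :: "'f \<Rightarrow> 's::comm_ring_1"
    and \<phi> :: "'r \<Rightarrow> 's" and lam :: "'v \<Rightarrow> 'r"
  assumes modV: "module scale"
    and wf: "whittaker_functional n scale act \<chi> {0} lam"
    and hom: "ring_hom \<phi>"
    and compat: "\<And>a. \<phi> (\<chi> a) = \<chi>' a"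
begin

lemmas ctx_facts' = ctx_facts[OF modV wf hom compat]
lemmas Lam0_free_act' = Lam0_free_act[OF modV wf hom compat]
lemmas Fx' = Fx[OF modV wf hom compat]

lemma model:
  assumes WL: "whittaker_functional n free_scale (free_act act) \<chi>' (tensor_rel scale \<phi>) Lam"
  shows "whittaker_model n (free_act act) Lam = base_change_model \<phi> (whittaker_model n act lam)"
proof -
  interpret F: module "free_scale :: 's \<Rightarrow> ('v \<Rightarrow>\<^sub>0 's) \<Rightarrow> _" by (rule module_free_scale)
  interpret BC: module "(\<lambda>r f. \<lambda>g. r * f g) :: 's \<Rightarrow> ('f mat \<Rightarrow> 's) \<Rightarrow> _" by (rule module_fun)
  have LH: "module_hom free_scale (*) Lam" and Lsurj: "surj Lam"
    and Lker: "{x. Lam x = 0} = coinv_rel n free_scale (free_act act) \<chi>' (tensor_rel scale \<phi>)"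
    using WL unfolding whittaker_functional_def by auto
  interpret LL: module_hom "free_scale :: 's \<Rightarrow> ('v \<Rightarrow>\<^sub>0 's) \<Rightarrow> _" "(*)" Lam by (rule LH)
  obtain e where e: "lam e = 1" using ctx_facts'(2) by (metis surjD)
  define c where "c = Lam (Poly_Mapping.single e 1)"
  have Lx: "Lam x = Lam0 \<phi> lam x * c" for x
  proof -
    have "Lam (x - free_scale (Lam0 \<phi> lam x) (Poly_Mapping.single e 1)) = 0"
      using Fx'[OF e, of x] Lker by blast
    then show ?thesis by (simp add: LL.diff LL.scale c_def)
  qed
  obtain y where "Lam y = 1" using Lsurj by (metis surjD)
  then have dc: "Lam0 \<phi> lam y * c = 1" by (simp add: Lx)
  define d where "d = Lam0 \<phi> lam y"
  define h where "h = (\<lambda>x g. if g \<in> GL n then Lam (free_act act g x) else 0)"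
  have modelL: "whittaker_model n (free_act act) Lam = range h"
    unfolding whittaker_model_def h_def by auto
  define Wv where "Wv = (\<lambda>v g. if g \<in> GL n then lam (act g v) else (0::'r))"
  have modelV: "whittaker_model n act lam = range Wv" unfolding whittaker_model_def Wv_def by auto
  have gens: "{(\<lambda>g. \<phi> (f g)) | f. f \<in> range Wv} = range (\<lambda>v g. \<phi> (Wv v g))" by auto
  have phi0': "\<phi> 0 = 0" using hom by (rule phi0)
  show ?thesis
    unfolding modelL modelV base_change_model_def gens
  proof
    show "range h \<subseteq> BC.span (range (\<lambda>v g. \<phi> (Wv v g)))"
    proof safe
      fix x :: "'v \<Rightarrow>\<^sub>0 's"
      have "h x = (\<Sum>v\<in>Poly_Mapping.keys x. (\<lambda>g. (Poly_Mapping.lookup x v * c) * \<phi> (Wv v g)))"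
        (is "_ = ?r")
      proof
        fix g
        show "h x g = ?r g"
        proof (cases "g \<in> GL n")
          case True
          have "h x g = (\<Sum>v\<in>Poly_Mapping.keys x. Poly_Mapping.lookup x v * \<phi> (lam (act g v))) * c"
            using True by (simp add: h_def Lx Lam0_free_act')
          also have "\<dots> = ?r g"
          proof -
            have sw: "a * b * c' = (a * c') * b" for a b c' :: 's by (simp only: mult.assoc mult.commute[of b c'])
            have "(\<Sum>v\<in>Poly_Mapping.keys x. Poly_Mapping.lookup x v * \<phi> (lam (act g v))) * c
               = (\<Sum>v\<in>Poly_Mapping.keys x. (Poly_Mapping.lookup x v * c) * \<phi> (lam (act g v)))"
              unfolding sum_distrib_right by (rule sum.cong[OF refl]) (rule sw)
            also have "\<dots> = ?r g" using True by (simp add: fun_sum_apply Wv_def)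
            finally show ?thesis .
          qed
          finally show ?thesis .
        next
          case False
          then show ?thesis by (simp add: h_def fun_sum_apply Wv_def phi0')
        qed
      qed
      also have "\<dots> \<in> BC.span (range (\<lambda>v g. \<phi> (Wv v g)))"
      proof (rule BC.span_sum)
        fix v
        have "(\<lambda>g. \<phi> (Wv v g)) \<in> BC.span (range (\<lambda>v g. \<phi> (Wv v g)))"
          by (rule BC.span_base) (rule rangeI)
        from BC.span_scale[OF this, of "Poly_Mapping.lookup x v * c"]
        show "(\<lambda>g. (Poly_Mapping.lookup x v * c) * \<phi> (Wv v g)) \<in> BC.span (range (\<lambda>v g. \<phi> (Wv v g)))"
          by simp
      qed
      finally show "h x \<in> BC.span (range (\<lambda>v g. \<phi> (Wv v g)))" .
    qed
  next
    show "BC.span (range (\<lambda>v g. \<phi> (Wv v g))) \<subseteq> range h"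
    proof (rule BC.span_minimal)
      show "range (\<lambda>v g. \<phi> (Wv v g)) \<subseteq> range h"
      proof safe
        fix v
        have "(\<lambda>g. \<phi> (Wv v g)) = h (Poly_Mapping.single v d)"
          using dc by (auto simp: h_def Wv_def phi0' free_act_single Lx Lam0_single d_def mult_ac)
        then show "(\<lambda>g. \<phi> (Wv v g)) \<in> range h" by blast
      qed
      show "BC.subspace (range h)"
      proof (rule BC.subspaceI)
        have fz: "free_act act g (0::'v \<Rightarrow>\<^sub>0 's) = 0" for g by (simp add: free_act_def)
        have "h 0 = 0" by (simp add: h_def fz fun_eq_iff)
        then show "0 \<in> range h" by (metis rangeI)
      next
        fix a b assume "a \<in> range h" "b \<in> range h"
        then obtain x y where "a = h x" "b = h y" by blast
        moreover have "h x + h y = h (x + y)"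
          by (auto simp: h_def plus_fun_def free_act_add LL.add)
        ultimately show "a + b \<in> range h" by (metis rangeI)
      next
        fix r :: 's and a assume "a \<in> range h"
        then obtain x where "a = h x" by blast
        moreover have "(\<lambda>g. r * h x g) = h (free_scale r x)"
          by (auto simp: h_def free_act_scale LL.scale)
        ultimately show "(\<lambda>g. r * a g) \<in> range h" by (metis rangeI)
      qed
    qed
  qed
qed

end


theorem lemma2p13:
  fixes p n :: nat
    and \<psi> :: "'f::{field,finite} \<Rightarrow> complex"
    and \<iota> :: "complex \<Rightarrow> 'r::comm_ring_1"
    and \<iota>' :: "complex \<Rightarrow> 'r2::comm_ring_1"
    and \<phi> :: "'r \<Rightarrow> 'r2"
    and scale :: "'r \<Rightarrow> 'v::ab_group_add \<Rightarrow> 'v"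
    and act :: "'f mat \<Rightarrow> 'v \<Rightarrow> 'v"
  assumes "prime p"
    and "CHAR('f) = p"
    and "add_char p \<psi>"
    and "Zp_algebra p \<iota>"
    and "Zp_algebra p \<iota>'"
    and "noetherian_ring TYPE('r)"
    and "noetherian_ring TYPE('r2)"
    and "ring_hom \<phi>"
    and "\<forall>x\<in>Zp p. \<phi> (\<iota> x) = \<iota>' x"
    and "RG_module n scale act"
    and "whittaker_type n scale act (\<iota> \<circ> \<psi>) {0}"
  shows "whittaker_type n free_scale (free_act act) (\<iota>' \<circ> \<psi>) (tensor_rel scale \<phi>)
    \<and> (\<forall>lam Lam. whittaker_functional n scale act (\<iota> \<circ> \<psi>) {0} lam
          \<and> whittaker_functional n free_scale (free_act act) (\<iota>' \<circ> \<psi>) (tensor_rel scale \<phi>) Lam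
        \<longrightarrow> whittaker_model n (free_act act) Lam
            = base_change_model \<phi> (whittaker_model n act lam))"
proof -
  have modV: "module scale" using assms(10) unfolding RG_module_def by blast
  have compat: "\<phi> ((\<iota> \<circ> \<psi>) a) = (\<iota>' \<circ> \<psi>) a" for a
    using assms(3,9) unfolding add_char_def by auto
  obtain lam0 where l0: "whittaker_functional n scale act (\<iota> \<circ> \<psi>) {0} lam0"
    using assms(11) unfolding whittaker_type_def by blast
  have A: "whittaker_type n free_scale (free_act act) (\<iota>' \<circ> \<psi>) (tensor_rel scale \<phi>)"
    unfolding whittaker_type_def using key[OF modV l0 assms(8) compat] by blast
  have B: "whittaker_model n (free_act act) Lam = base_change_model \<phi> (whittaker_model n act lam)"
    if C: "whittaker_functional n scale act (\<iota> \<circ> \<psi>) {0} lam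
          \<and> whittaker_functional n free_scale (free_act act) (\<iota>' \<circ> \<psi>) (tensor_rel scale \<phi>) Lam"
    for lam Lam
    using model[OF modV conjunct1[OF C] assms(8) compat conjunct2[OF C]] .
  show ?thesis using A B by blast
qed

end
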